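(* Let $\Gamma$ be a gain operator on $\ell^\infty_+(\mathcal I)$. If $\Sigma(\Gamma)$ is GATT, then $\Gamma$ satisfies the uniform NJI condition.
   Context: Let $\mathcal I$ be a nonempty countable index set; $\ell^\infty_+(\mathcal I)$ is the cone of nonnegative real families $s=(s_i)_{i\in\mathcal I}$ with $\|s\|:=\sup_i|s_i|<\infty$, ordered componentwise. $\mathcal K_\infty$: continuous strictly increasing unbounded $\gamma:\mathbb R_+\to\mathbb R_+$ with $\gamma(0)=0$. For $\mathcal J\subset\mathcal I$, $s_{|\mathcal J}$ agrees with $s$ on $\mathcal J$ and is $0$ elsewhere. Gain operator: for each $i$ a finite (possibly empty) $\mathcal I_i\subset\mathcal I\setminus\{i\}$; directed graph $\mathcal G$ with vertices $\mathcal I$ and edges $ji$, $j\in\mathcal I_i$; a pointwise equicontinuous family $\gamma_{ij}\in\mathcal K_\infty$ ($ji\in E(\mathcal G)$); functions $\mu_i:\ell^\infty_+(\mathcal I)\to[0,\infty]$ with (M1) some $\xi\in\mathcal K_\infty$ has $\mu_i(0)=0$, $\mu_i(s)\ge\xi(\|s\|)$; (M2) $\mu_i$ monotone; (M3) for each finite $\mathcal J$, $\mu_i$ restricted to vectors vanishing off $\mathcal J$ is finite-valued and continuous; (M4) for each norm-bounded $A$ and $\varepsilon>0$ there is $\delta>0$ with $\sup_i|\mu_i(s_{|\mathcal I_i})-\mu_i(s^0_{|\mathcal I_i})|\le\varepsilon$ whenever $s^0\in A$, $\|s-s^0\|\le\delta$. $\Gamma_i(s):=\mu_i([\gamma_{ij}(s_j)]_{j\in\mathcal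 I_i})$ (argument zero outside $\mathcal I_i$). $\mathcal N^-_i(n)$: vertices $j$ with a directed path from $j$ to $i$ of length at most $n$ ($\mathcal N^-_i(0)=\{i\}$). $\Sigma(\Gamma)$ is the system $s^{n+1}=\Gamma(s^n)$; it is GATT if $\|\Gamma^n(s)\|\to0$ for every $s\in\ell^\infty_+(\mathcal I)$. Uniform NJI condition: for all $r,\varepsilon>0$ there are $n\in\mathbb N$, $\delta>0$ such that for all $s\in\ell^\infty_+(\mathcal I)$, $i\in\mathcal I$ with $s_i\ge\varepsilon$ and $\|s\|\le r$ there is $j\in\mathcal N^-_i(n)$ with $s_j\ge\delta$ and $\Gamma_j(s)<s_j$. *)

theory Defs
  imports "HOL-Analysis.Analysis"
begin

text \<open>Index set: a countable type 'i (types are nonempty).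
  Elements of ell^infty_+(I): nonnegative bounded real families 'i => real.\<close>

definition linf_plus :: "('i \<Rightarrow> real) set" where
  "linf_plus = {s. (\<forall>i. 0 \<le> s i) \<and> bdd_above (range (\<lambda>i. \<bar>s i\<bar>))}"

definition supnorm :: "('i \<Rightarrow> real) \<Rightarrow> real" where
  "supnorm s = (SUP i. \<bar>s i\<bar>)"

definition restr :: "'i set \<Rightarrow> ('i \<Rightarrow> real) \<Rightarrow> ('i \<Rightarrow> real)" where
  "restr J s = (\<lambda>i. if i \<in> J then s i else 0)"

definition K_inf :: "(real \<Rightarrow> real) \<Rightarrow> bool" where
  "K_inf g \<longleftrightarrow> continuous_on {0..} g \<and> strict_mono_on {0..} g \<and> g 0 = 0
     \<and> (\<forall>M. \<exists>r\<ge>0. g r > M)"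

text \<open>Gain operator data: Ii i is the finite set of in-neighbours of i (edge j->i iff j in Ii i),
  gam i j is gamma_ij, mu i is mu_i (values in [0,\<infinity>] as extended reals).\<close>

definition gain_operator ::
  "('i \<Rightarrow> 'i set) \<Rightarrow> ('i \<Rightarrow> 'i \<Rightarrow> real \<Rightarrow> real) \<Rightarrow> ('i \<Rightarrow> ('i \<Rightarrow> real) \<Rightarrow> ereal) \<Rightarrow> bool" where
  "gain_operator Ii gam mu \<longleftrightarrow>
     (\<forall>i. finite (Ii i) \<and> i \<notin> Ii i) \<and>
     (\<forall>i. \<forall>j\<in>Ii i. K_inf (gam i j)) \<and>
     \<comment> \<open>pointwise equicontinuity of the family gamma_ij\<close>
     (\<forall>r\<ge>0. \<forall>e>0. \<exists>d>0. \<forall>i. \<forall>j\<in>Ii i. \<forall>r'\<ge>0.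
         \<bar>r' - r\<bar> < d \<longrightarrow> \<bar>gam i j r' - gam i j r\<bar> < e) \<and>
     \<comment> \<open>values in [0,\<infinity>]\<close>
     (\<forall>i. \<forall>s\<in>linf_plus. 0 \<le> mu i s) \<and>
     \<comment> \<open>(M1)\<close>
     (\<exists>xi. K_inf xi \<and> (\<forall>i. mu i (\<lambda>_. 0) = 0 \<and>
         (\<forall>s\<in>linf_plus. ereal (xi (supnorm s)) \<le> mu i s))) \<and>
     \<comment> \<open>(M2)\<close>
     (\<forall>i. \<forall>s\<in>linf_plus. \<forall>t\<in>linf_plus. (\<forall>k. s k \<le> t k) \<longrightarrow> mu i s \<le> mu i t) \<and>
     \<comment> \<open>(M3)\<close>
     (\<forall>i J. finite J \<longrightarrow>
        (\<forall>s\<in>linf_plus. (\<forall>k. k \<notin> J \<longrightarrow> s k = 0) \<longrightarrow>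
           \<bar>mu i s\<bar> \<noteq> \<infinity> \<and>
           (\<forall>e>0. \<exists>d>0. \<forall>t\<in>linf_plus. (\<forall>k. k \<notin> J \<longrightarrow> t k = 0) \<longrightarrow>
               supnorm (\<lambda>k. t k - s k) < d \<longrightarrow> \<bar>mu i t - mu i s\<bar> < ereal e))) \<and>
     \<comment> \<open>(M4)\<close>
     (\<forall>A\<subseteq>linf_plus. (\<exists>R. \<forall>s\<in>A. supnorm s \<le> R) \<longrightarrow>
        (\<forall>e>0. \<exists>d>0. \<forall>s0\<in>A. \<forall>s\<in>linf_plus. supnorm (\<lambda>k. s k - s0 k) \<le> d \<longrightarrow>
            (\<forall>i. \<bar>mu i (restr (Ii i) s) - mu i (restr (Ii i) s0)\<bar> \<le> ereal e)))"

text \<open>Gamma_i(s) = mu_i([gamma_ij(s_j)]_{j in Ii}) (finite by (M3)).\<close>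

definition Gam ::
  "('i \<Rightarrow> 'i set) \<Rightarrow> ('i \<Rightarrow> 'i \<Rightarrow> real \<Rightarrow> real) \<Rightarrow> ('i \<Rightarrow> ('i \<Rightarrow> real) \<Rightarrow> ereal)
     \<Rightarrow> ('i \<Rightarrow> real) \<Rightarrow> ('i \<Rightarrow> real)" where
  "Gam Ii gam mu s = (\<lambda>i. real_of_ereal (mu i (\<lambda>j. if j \<in> Ii i then gam i j (s j) else 0)))"

fun walk :: "('i \<Rightarrow> 'i set) \<Rightarrow> nat \<Rightarrow> 'i \<Rightarrow> 'i \<Rightarrow> bool" where
  "walk Ii 0 j i = (j = i)"
| "walk Ii (Suc k) j i = (\<exists>l\<in>Ii i. walk Ii k j l)"

definition Nminus :: "('i \<Rightarrow> 'i set) \<Rightarrow> 'i \<Rightarrow> nat \<Rightarrow> 'i set" where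
  "Nminus Ii i n = {j. \<exists>k\<le>n. walk Ii k j i}"

definition GATT :: "(('i \<Rightarrow> real) \<Rightarrow> ('i \<Rightarrow> real)) \<Rightarrow> bool" where
  "GATT G \<longleftrightarrow> (\<forall>s\<in>linf_plus. (\<lambda>n. supnorm ((G ^^ n) s)) \<longlonglongrightarrow> 0)"

definition uniform_NJI ::
  "('i \<Rightarrow> 'i set) \<Rightarrow> (('i \<Rightarrow> real) \<Rightarrow> ('i \<Rightarrow> real)) \<Rightarrow> bool" where
  "uniform_NJI Ii G \<longleftrightarrow>
     (\<forall>r>0. \<forall>e>0. \<exists>n::nat. \<exists>d>0. \<forall>s\<in>linf_plus. \<forall>i.
        e \<le> s i \<and> supnorm s \<le> r \<longrightarrow>
        (\<exists>j\<in>Nminus Ii i n. d \<le> s j \<and> G s j < s j))"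

end

theory Submission
  imports Defs
begin

definition argv :: "('i \<Rightarrow> 'i set) \<Rightarrow> ('i \<Rightarrow> 'i \<Rightarrow> real \<Rightarrow> real) \<Rightarrow> 'i \<Rightarrow> ('i \<Rightarrow> real) \<Rightarrow> ('i \<Rightarrow> real)" where
  "argv Ii gam i s = (\<lambda>j. if j \<in> Ii i then gam i j (s j) else 0)"

lemma linf_le: "s \<in> linf_plus \<Longrightarrow> s i \<le> supnorm s"
proof -
  assume "s \<in> linf_plus"
  then have "bdd_above (range (\<lambda>i. \<bar>s i\<bar>))" "0 \<le> s i" unfolding linf_plus_def by auto
  then have "\<bar>s i\<bar> \<le> supnorm s" unfolding supnorm_def by (intro cSUP_upper) auto
  then show ?thesis by simp
qed

lemma supnorm_const: "supnorm (\<lambda>_. c) = \<bar>c\<bar>"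
  unfolding supnorm_def by simp

lemma const_linf: "0 \<le> c \<Longrightarrow> (\<lambda>_. c) \<in> linf_plus"
  unfolding linf_plus_def by auto

lemma linf_boundI: "(\<forall>l. 0 \<le> s l \<and> s l \<le> B) \<Longrightarrow> s \<in> linf_plus"
  unfolding linf_plus_def bdd_above_def by (intro CollectI conjI) (auto intro!: exI[of _ B])

lemma supnorm_le: "(\<forall>l. \<bar>s l\<bar> \<le> B) \<Longrightarrow> supnorm s \<le> B"
  unfolding supnorm_def by (intro cSUP_least) auto

lemma walk_prepend: "walk Ii k j i \<Longrightarrow> l \<in> Ii j \<Longrightarrow> walk Ii (Suc k) l i"
proof (induction k arbitrary: i)
  case 0 then show ?case by auto
next
  case (Suc k)
  then obtain m where "m \<in> Ii i" "walk Ii k j m" by auto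
  have "walk Ii (Suc k) l m" using Suc.IH[OF \<open>walk Ii k j m\<close> Suc.prems(2)] .
  then show ?case using \<open>m \<in> Ii i\<close> by (subst walk.simps(2)) blast
qed

lemma N_self: "i \<in> Nminus Ii i n"
  unfolding Nminus_def by (auto intro!: exI[of _ 0])

lemma N_step: "j \<in> Nminus Ii i n \<Longrightarrow> l \<in> Ii j \<Longrightarrow> l \<in> Nminus Ii i (Suc n)"
proof -
  assume "j \<in> Nminus Ii i n" "l \<in> Ii j"
  then obtain k where "k \<le> n" "walk Ii k j i" unfolding Nminus_def by auto
  from \<open>walk Ii k j i\<close> \<open>l \<in> Ii j\<close> have "walk Ii (Suc k) l i" by (rule walk_prepend)
  then show ?thesis unfolding Nminus_def using \<open>k \<le> n\<close> by (auto intro!: exI[of _ "Suc k"])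
qed

lemma N_mono: "j \<in> Nminus Ii i n \<Longrightarrow> n \<le> m \<Longrightarrow> j \<in> Nminus Ii i m"
  unfolding Nminus_def using le_trans by blast

lemma ereal_aux: "\<bar>a - ereal b\<bar> \<le> ereal e \<Longrightarrow> a \<le> ereal c \<Longrightarrow> \<bar>a\<bar> \<noteq> \<infinity> \<Longrightarrow> b - e \<le> c"
  by (cases a) auto

lemma ereal_aux2: "\<bar>a - b\<bar> \<le> ereal 1 \<Longrightarrow> b \<le> ereal c \<Longrightarrow> \<bar>a\<bar> \<noteq> \<infinity> \<Longrightarrow> \<bar>b\<bar> \<noteq> \<infinity> \<Longrightarrow> a \<le> ereal (c + 1)"
  by (cases a; cases b) auto

context
  fixes Ii :: "'i \<Rightarrow> 'i set" and gam :: "'i \<Rightarrow> 'i \<Rightarrow> real \<Rightarrow> real"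
    and mu :: "'i \<Rightarrow> ('i \<Rightarrow> real) \<Rightarrow> ereal"
  assumes go: "gain_operator Ii gam mu"
begin

lemmas gp = go[unfolded gain_operator_def]
lemmas c1 = gp[THEN conjunct1]
lemmas c2 = gp[THEN conjunct2, THEN conjunct1]
lemmas c3 = gp[THEN conjunct2, THEN conjunct2, THEN conjunct1]
lemmas c4 = gp[THEN conjunct2, THEN conjunct2, THEN conjunct2, THEN conjunct1]
lemmas c5 = gp[THEN conjunct2, THEN conjunct2, THEN conjunct2, THEN conjunct2, THEN conjunct1]
lemmas c6 = gp[THEN conjunct2, THEN conjunct2, THEN conjunct2, THEN conjunct2, THEN conjunct2, THEN conjunct1]
lemmas c7 = gp[THEN conjunct2, THEN conjunct2, THEN conjunct2, THEN conjunct2, THEN conjunct2, THEN conjunct2, THEN conjunct1]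
lemmas c8 = gp[THEN conjunct2, THEN conjunct2, THEN conjunct2, THEN conjunct2, THEN conjunct2, THEN conjunct2, THEN conjunct2]

lemma fin: "finite (Ii i)" using c1 by blast
lemma Kg: "j \<in> Ii i \<Longrightarrow> K_inf (gam i j)" using c2 by blast
lemma eqc: "r \<ge> 0 \<Longrightarrow> e > 0 \<Longrightarrow> \<exists>d>0. \<forall>i. \<forall>j\<in>Ii i. \<forall>r'\<ge>0.
         \<bar>r' - r\<bar> < d \<longrightarrow> \<bar>gam i j r' - gam i j r\<bar> < e"
  using c3 by blast
lemma mu_nonneg: "s \<in> linf_plus \<Longrightarrow> 0 \<le> mu i s" using c4 by blast
lemma mu_zero: "mu i (\<lambda>_. 0) = 0" using c5 by blast
lemma mu_mono: "s \<in> linf_plus \<Longrightarrow> t \<in> linf_plus \<Longrightarrow> (\<forall>k. s k \<le> t k) \<Longrightarrow> mu i s \<le> mu i t"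
  using c6 by blast
lemma mu_fin: "s \<in> linf_plus \<Longrightarrow> (\<forall>k. k \<notin> Ii i \<longrightarrow> s k = 0) \<Longrightarrow> \<bar>mu i s\<bar> \<noteq> \<infinity>"
proof -
  assume a: "s \<in> linf_plus" "\<forall>k. k \<notin> Ii i \<longrightarrow> s k = 0"
  have fi: "finite (Ii i)" by (rule fin)
  show ?thesis
    by (rule c7[THEN spec[of _ i], THEN spec[of _ "Ii i"], THEN mp, OF fi, THEN bspec, OF a(1), THEN mp, OF a(2), THEN conjunct1])
qed
lemma M4: "A \<subseteq> linf_plus \<Longrightarrow> (\<forall>s\<in>A. supnorm s \<le> R) \<Longrightarrow> e > 0 \<Longrightarrow>
        (\<exists>d>0. \<forall>s0\<in>A. \<forall>s\<in>linf_plus. supnorm (\<lambda>k. s k - s0 k) \<le> d \<longrightarrow>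
            (\<forall>i. \<bar>mu i (restr (Ii i) s) - mu i (restr (Ii i) s0)\<bar> \<le> ereal e))"
proof -
  assume a: "A \<subseteq> linf_plus" "\<forall>s\<in>A. supnorm s \<le> R" "e > 0"
  then have "\<exists>R. \<forall>s\<in>A. supnorm s \<le> R" by blast
  from c8[rule_format, OF a(1) this a(3)] show ?thesis .
qed

lemma gam_mono: "j \<in> Ii i \<Longrightarrow> 0 \<le> x \<Longrightarrow> x \<le> y \<Longrightarrow> gam i j x \<le> gam i j y"
  using Kg[of j i] unfolding K_inf_def by (auto intro: strict_mono_on_leD)

lemma gam_nonneg: "j \<in> Ii i \<Longrightarrow> 0 \<le> x \<Longrightarrow> 0 \<le> gam i j x"
  using gam_mono[of j i 0 x] Kg[of j i] unfolding K_inf_def by auto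

lemma unif_eqc:
  assumes "0 \<le> R" "e > 0"
  shows "\<exists>d>0. \<forall>i. \<forall>j\<in>Ii i. \<forall>x\<in>{0..R}. \<forall>x'\<in>{0..R}. \<bar>x' - x\<bar> < d \<longrightarrow> \<bar>gam i j x' - gam i j x\<bar> < e"
proof -
  have "\<exists>d. 0 < d \<and> (\<forall>f \<in> {gam i j | i j. j \<in> Ii i}. \<forall>x' \<in> {0..R}. dist x' x < d \<longrightarrow> dist (f x') (f x) < e')"
    if "x \<in> {0..R}" "0 < e'" for x e'
  proof -
    have x0: "0 \<le> x" using that(1) by simp
    from eqc[OF x0 that(2)] obtain d where "d > 0" and d: "\<forall>i. \<forall>j\<in>Ii i. \<forall>r'\<ge>0. \<bar>r' - x\<bar> < d \<longrightarrow> \<bar>gam i j r' - gam i j x\<bar> < e'"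
      by blast
    show ?thesis
    proof (intro exI[of _ d] conjI ballI impI)
      show "0 < d" by fact
      fix f x' assume f: "f \<in> {gam i j | i j. j \<in> Ii i}" and x': "x' \<in> {0..R}" and dx: "dist x' x < d"
      from f obtain i j where ij: "j \<in> Ii i" "f = gam i j" by blast
      have x'0: "0 \<le> x'" using x' by simp
      have "\<bar>x' - x\<bar> < d" using dx by (simp add: dist_real_def)
      then have "\<bar>gam i j x' - gam i j x\<bar> < e'" using d ij(1) x'0 by blast
      then show "dist (f x') (f x) < e'" using ij(2) by (simp add: dist_real_def)
    qed
  qed
  then obtain d where "0 < d" and d: "\<And>f x x'. \<lbrakk>f \<in> {gam i j | i j. j \<in> Ii i}; x \<in> {0..R}; x' \<in> {0..R}; dist x' x < d\<rbrakk> \<Longrightarrow> dist (f x') (f x) < e"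
    using compact_uniformly_equicontinuous[OF compact_Icc[of 0 R], of "{gam i j | i j. j \<in> Ii i}" e] assms(2)
    by blast
  show ?thesis
  proof (intro exI[of _ d] conjI allI ballI impI)
    show "0 < d" by fact
    fix i j x x' assume "j \<in> Ii i" "x \<in> {0..R}" "x' \<in> {0..R}" "\<bar>x' - x\<bar> < d"
    then have "dist (gam i j x') (gam i j x) < e"
      by (intro d) (auto simp: dist_real_def)
    then show "\<bar>gam i j x' - gam i j x\<bar> < e" by (simp add: dist_real_def)
  qed
qed


lemma argv_nonneg: "(\<forall>l. 0 \<le> s l) \<Longrightarrow> 0 \<le> argv Ii gam i s l"
  unfolding argv_def by (auto intro: gam_nonneg)

lemma argv_linf: assumes "\<forall>l. 0 \<le> s l" shows "argv Ii gam i s \<in> linf_plus"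
proof (rule linf_boundI[where B="\<Sum>l\<in>Ii i. gam i l (s l)"], intro allI conjI)
  fix l show "0 \<le> argv Ii gam i s l" using argv_nonneg assms by blast
  show "argv Ii gam i s l \<le> (\<Sum>l\<in>Ii i. gam i l (s l))"
    unfolding argv_def using fin[of i] assms
    by (auto intro!: member_le_sum sum_nonneg gam_nonneg)
qed

lemma argv_zero: "k \<notin> Ii i \<Longrightarrow> argv Ii gam i s k = 0"
  unfolding argv_def by auto

lemma Gam_argv: "Gam Ii gam mu s i = real_of_ereal (mu i (argv Ii gam i s))"
  unfolding Gam_def argv_def by simp

lemma mu_argv_eq: "(\<forall>l. 0 \<le> s l) \<Longrightarrow> mu i (argv Ii gam i s) = ereal (Gam Ii gam mu s i)"
proof -
  assume s: "\<forall>l. 0 \<le> s l"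
  have l: "argv Ii gam i s \<in> linf_plus" using argv_linf s by blast
  have z: "\<forall>k. k \<notin> Ii i \<longrightarrow> argv Ii gam i s k = 0" by (simp add: argv_zero)
  have "\<bar>mu i (argv Ii gam i s)\<bar> \<noteq> \<infinity>" using mu_fin[OF l z] .
  then show ?thesis by (simp add: Gam_argv ereal_real')
qed

lemma Gam_nonneg: "(\<forall>l. 0 \<le> s l) \<Longrightarrow> 0 \<le> Gam Ii gam mu s i"
  unfolding Gam_argv using mu_nonneg[OF argv_linf] by (simp add: real_of_ereal_pos)

lemma Gam_mono:
  assumes "\<forall>l. 0 \<le> s l" "\<forall>l. 0 \<le> t l" "\<forall>l\<in>Ii i. s l \<le> t l"
  shows "Gam Ii gam mu s i \<le> Gam Ii gam mu t i"
proof -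
  have "mu i (argv Ii gam i s) \<le> mu i (argv Ii gam i t)"
    using assms by (intro mu_mono argv_linf) (auto simp: argv_def intro: gam_mono)
  then show ?thesis using mu_argv_eq assms by simp
qed

lemma gam_bound:
  assumes "0 \<le> R"
  shows "\<exists>C. \<forall>i. \<forall>j\<in>Ii i. \<forall>x\<in>{0..R}. gam i j x \<le> C"
proof -
  obtain d where "d > 0" and d: "\<forall>i. \<forall>j\<in>Ii i. \<forall>x\<in>{0..R}. \<forall>x'\<in>{0..R}. \<bar>x' - x\<bar> < d \<longrightarrow> \<bar>gam i j x' - gam i j x\<bar> < 1"
    using unif_eqc[OF assms, of 1] by auto
  have claim: "\<forall>i. \<forall>j\<in>Ii i. \<forall>x. 0 \<le> x \<and> x \<le> R \<and> x \<le> real k * d / 2 \<longrightarrow> gam i j x \<le> real k" for k :: nat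
  proof (induction k)
    case 0
    show ?case
    proof (intro allI ballI impI)
      fix i j x assume "j \<in> Ii i" "0 \<le> x \<and> x \<le> R \<and> x \<le> real 0 * d / 2"
      then have "x = 0" by auto
      then show "gam i j x \<le> real 0" using Kg[OF \<open>j \<in> Ii i\<close>] unfolding K_inf_def by simp
    qed
  next
    case (Suc k)
    show ?case
    proof (intro allI ballI impI)
      fix i j x assume j: "j \<in> Ii i" and x: "0 \<le> x \<and> x \<le> R \<and> x \<le> real (Suc k) * d / 2"
      show "gam i j x \<le> real (Suc k)"
      proof (cases "x \<le> real k * d / 2")
        case True
        have "0 \<le> x \<and> x \<le> R \<and> x \<le> real k * d / 2" using x True by simp
        then have "gam i j x \<le> real k" by (rule Suc.IH[THEN spec[of _ i], THEN bspec[OF _ j], THEN spec[of _ x], THEN mp])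
        then show ?thesis by simp
      next
        case False
        define x' where "x' = max (x - d / 2) 0"
        have kd: "0 \<le> real k * d / 2" using \<open>d > 0\<close> by simp
        have sk: "real (Suc k) * d / 2 = real k * d / 2 + d / 2" by (simp add: algebra_simps)
        have a1: "x - d / 2 \<le> real k * d / 2" using x sk by linarith
        have "x' \<le> real k * d / 2" unfolding x'_def using a1 kd by (rule max.boundedI)
        moreover have "0 \<le> x'" "x' \<le> R" using x \<open>d > 0\<close> unfolding x'_def by auto
        ultimately have x': "0 \<le> x' \<and> x' \<le> R \<and> x' \<le> real k * d / 2" by blast
        have "gam i j x' \<le> real k" by (rule Suc.IH[THEN spec[of _ i], THEN bspec[OF _ j], THEN spec[of _ x'], THEN mp, OF x'])
        moreover have dist: "\<bar>x - x'\<bar> < d" using x \<open>d > 0\<close> unfolding x'_def by auto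
        have xR: "x \<in> {0..R}" and x'R: "x' \<in> {0..R}" using x x' by auto
        have "\<bar>gam i j x - gam i j x'\<bar> < 1" by (rule d[rule_format, OF j x'R xR dist])
        ultimately show ?thesis by simp
      qed
    qed
  qed
  define k where "k = nat (ceiling (2 * R / d))"
  have "2 * R / d \<le> real k" unfolding k_def by linarith
  then have "R \<le> real k * d / 2" using \<open>d > 0\<close> by (simp add: field_simps)
  then show ?thesis using claim[of k] by (auto intro!: exI[of _ "real k"])
qed

lemma restr_const_linf: "0 \<le> t \<Longrightarrow> restr J (\<lambda>_. t) \<in> linf_plus"
  by (rule linf_boundI[where B=t]) (auto simp: restr_def)

lemma mu_const_bound:
  assumes "0 \<le> C"
  shows "\<exists>B. \<forall>i. \<forall>t\<in>{0..C}. mu i (restr (Ii i) (\<lambda>_. t)) \<le> ereal B"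
proof -
  define A :: "('i \<Rightarrow> real) set" where "A = {(\<lambda>_. t) | t. 0 \<le> t \<and> t \<le> C}"
  have "A \<subseteq> linf_plus" unfolding A_def using const_linf by auto
  moreover have "\<forall>s\<in>A. supnorm s \<le> C" unfolding A_def by (auto simp: supnorm_const)
  ultimately obtain d where "d > 0" and d: "\<forall>s0\<in>A. \<forall>s\<in>linf_plus. supnorm (\<lambda>k. s k - s0 k) \<le> d \<longrightarrow>
            (\<forall>i. \<bar>mu i (restr (Ii i) s) - mu i (restr (Ii i) s0)\<bar> \<le> ereal 1)"
    using M4[of A C 1] by auto
  have fin': "\<bar>mu i (restr (Ii i) (\<lambda>_. t))\<bar> \<noteq> \<infinity>" if "0 \<le> t" for i t
    using mu_fin[OF restr_const_linf[OF that]] by (auto simp: restr_def)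
  have claim: "\<forall>i t. 0 \<le> t \<and> t \<le> C \<and> t \<le> real k * d \<longrightarrow> mu i (restr (Ii i) (\<lambda>_. t)) \<le> ereal (real k)" for k :: nat
  proof (induction k)
    case 0
    show ?case
    proof (intro allI impI)
      fix i t assume "0 \<le> t \<and> t \<le> C \<and> t \<le> real 0 * d"
      then have "t = 0" by auto
      moreover have "restr (Ii i) (\<lambda>_. 0) = (\<lambda>_. 0)" by (auto simp: restr_def)
      ultimately show "mu i (restr (Ii i) (\<lambda>_. t)) \<le> ereal (real 0)" using mu_zero by simp
    qed
  next
    case (Suc k)
    show ?case
    proof (intro allI impI)
      fix i t assume t: "0 \<le> t \<and> t \<le> C \<and> t \<le> real (Suc k) * d"
      show "mu i (restr (Ii i) (\<lambda>_. t)) \<le> ereal (real (Suc k))"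
      proof (cases "t \<le> real k * d")
        case True
        have "0 \<le> t \<and> t \<le> C \<and> t \<le> real k * d" using t True by simp
        then have "mu i (restr (Ii i) (\<lambda>_. t)) \<le> ereal (real k)" by (rule Suc.IH[THEN spec[of _ i], THEN spec[of _ t], THEN mp])
        also have "\<dots> \<le> ereal (real (Suc k))" by simp
        finally show ?thesis .
      next
        case False
        define t' where "t' = max (t - d) 0"
        have kd: "0 \<le> real k * d" using \<open>d > 0\<close> by simp
        have sk: "real (Suc k) * d = real k * d + d" by (simp add: algebra_simps)
        have a1: "t - d \<le> real k * d" using t sk by linarith
        have "t' \<le> real k * d" unfolding t'_def using a1 kd by (rule max.boundedI)
        moreover have "0 \<le> t'" "t' \<le> C" using t \<open>d > 0\<close> unfolding t'_def by auto
        ultimately have t': "0 \<le> t' \<and> t' \<le> C \<and> t' \<le> real k * d" by blast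
        have b: "mu i (restr (Ii i) (\<lambda>_. t')) \<le> ereal (real k)" by (rule Suc.IH[THEN spec[of _ i], THEN spec[of _ t'], THEN mp, OF t'])
        have tA: "(\<lambda>_. t') \<in> A" unfolding A_def using t' by auto
        have tl: "(\<lambda>_. t) \<in> linf_plus" using t const_linf by auto
        have "supnorm (\<lambda>k. t - t') \<le> d" unfolding supnorm_const using t \<open>d>0\<close> unfolding t'_def by auto
        then have sn: "supnorm (\<lambda>k. (\<lambda>_. t) k - (\<lambda>_. t') k) \<le> d" by simp
        have "\<bar>mu i (restr (Ii i) (\<lambda>_. t)) - mu i (restr (Ii i) (\<lambda>_. t'))\<bar> \<le> ereal 1"
          using d[THEN bspec[OF _ tA], THEN bspec[OF _ tl], THEN mp, OF sn] by (rule spec)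
        from ereal_aux2[OF this b fin' fin'] t t' show ?thesis by (simp add: add.commute)
      qed
    qed
  qed
  define k where "k = nat (ceiling (C / d))"
  have "C / d \<le> real k" unfolding k_def by linarith
  then have "C \<le> real k * d" using \<open>d > 0\<close> by (simp add: field_simps)
  then show ?thesis using claim[of k] by (auto intro!: exI[of _ "real k"])
qed


lemma Gam_bound:
  assumes "0 \<le> R"
  shows "\<exists>C. \<forall>s. (\<forall>l. 0 \<le> s l \<and> s l \<le> R) \<longrightarrow> (\<forall>i. Gam Ii gam mu s i \<le> C)"
proof -
  obtain C0 where C0: "\<forall>i. \<forall>j\<in>Ii i. \<forall>x\<in>{0..R}. gam i j x \<le> C0" using gam_bound[OF assms] by auto
  define C1 where "C1 = max C0 0"
  obtain B where B: "\<forall>i. \<forall>t\<in>{0..C1}. mu i (restr (Ii i) (\<lambda>_. t)) \<le> ereal B"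
    using mu_const_bound[of C1] unfolding C1_def by auto
  show ?thesis
  proof (intro exI[of _ B] allI impI)
    fix s :: "'i \<Rightarrow> real" and i assume s: "\<forall>l. 0 \<le> s l \<and> s l \<le> R"
    have l1: "argv Ii gam i s \<in> linf_plus" using argv_linf s by blast
    have l2: "restr (Ii i) (\<lambda>_. C1) \<in> linf_plus" by (rule restr_const_linf) (simp add: C1_def)
    have le: "\<forall>k. argv Ii gam i s k \<le> restr (Ii i) (\<lambda>_. C1) k"
    proof
      fix k show "argv Ii gam i s k \<le> restr (Ii i) (\<lambda>_. C1) k"
      proof (cases "k \<in> Ii i")
        case True
        have "s k \<in> {0..R}" using s by simp
        then have "gam i k (s k) \<le> C0" using C0 True by blast
        then show ?thesis using True unfolding argv_def restr_def C1_def by simp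
      next
        case False then show ?thesis unfolding argv_def restr_def C1_def by simp
      qed
    qed
    have "mu i (argv Ii gam i s) \<le> mu i (restr (Ii i) (\<lambda>_. C1))" by (rule mu_mono[OF l1 l2 le])
    also have "\<dots> \<le> ereal B" using B unfolding C1_def by auto
    finally show "Gam Ii gam mu s i \<le> B" using mu_argv_eq s by simp
  qed
qed

lemma Gam_linf: "s \<in> linf_plus \<Longrightarrow> Gam Ii gam mu s \<in> linf_plus"
proof -
  assume s: "s \<in> linf_plus"
  have "0 \<le> s undefined" using s unfolding linf_plus_def by blast
  then have "0 \<le> supnorm s" using linf_le[OF s, of undefined] by linarith
  then obtain C where C: "\<forall>t. (\<forall>l. 0 \<le> t l \<and> t l \<le> supnorm s) \<longrightarrow> (\<forall>i. Gam Ii gam mu t i \<le> C)"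
    using Gam_bound[OF \<open>0 \<le> supnorm s\<close>] by blast
  have s0: "\<forall>l. 0 \<le> s l" using s unfolding linf_plus_def by blast
  have sb: "\<forall>l. 0 \<le> s l \<and> s l \<le> supnorm s" using s0 linf_le[OF s] by blast
  have "\<forall>i. Gam Ii gam mu s i \<le> C" using C sb by blast
  moreover have "\<forall>i. 0 \<le> Gam Ii gam mu s i" using Gam_nonneg[OF s0] by blast
  ultimately show ?thesis by (intro linf_boundI[where B=C]) blast
qed

lemma Gam_lowcont:
  assumes "0 \<le> R" "\<eta> > 0"
  shows "\<exists>\<delta>>0. \<forall>s t i. (\<forall>l. 0 \<le> s l \<and> s l \<le> R) \<longrightarrow> (\<forall>l. 0 \<le> t l) \<longrightarrow>
     (\<forall>l\<in>Ii i. s l - \<delta> \<le> t l) \<longrightarrow> Gam Ii gam mu s i - \<eta> \<le> Gam Ii gam mu t i"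
proof -
  obtain C0 where C0: "\<forall>i. \<forall>j\<in>Ii i. \<forall>x\<in>{0..R}. gam i j x \<le> C0" using gam_bound[OF assms(1)] by auto
  define C1 where "C1 = max C0 0"
  define A :: "('i \<Rightarrow> real) set" where "A = {v\<in>linf_plus. \<forall>l. v l \<le> C1}"
  have "A \<subseteq> linf_plus" unfolding A_def by auto
  moreover have "\<forall>s\<in>A. supnorm s \<le> C1" unfolding A_def linf_plus_def
    by (auto intro!: supnorm_le)
  ultimately obtain d2 where "d2 > 0" and d2: "\<forall>s0\<in>A. \<forall>s\<in>linf_plus. supnorm (\<lambda>k. s k - s0 k) \<le> d2 \<longrightarrow>
            (\<forall>i. \<bar>mu i (restr (Ii i) s) - mu i (restr (Ii i) s0)\<bar> \<le> ereal \<eta>)"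
    using M4[of A C1 \<eta>] assms by auto
  obtain d1 where "d1 > 0" and d1: "\<forall>i. \<forall>j\<in>Ii i. \<forall>x\<in>{0..R}. \<forall>x'\<in>{0..R}. \<bar>x' - x\<bar> < d1 \<longrightarrow> \<bar>gam i j x' - gam i j x\<bar> < d2"
    using unif_eqc[OF assms(1) \<open>d2 > 0\<close>] by auto
  show ?thesis
  proof (intro exI[of _ "d1/2"] conjI allI impI)
    show "0 < d1 / 2" using \<open>d1 > 0\<close> by simp
    fix s t :: "'i \<Rightarrow> real" and i
    assume s: "\<forall>l. 0 \<le> s l \<and> s l \<le> R" and t: "\<forall>l. 0 \<le> t l" and st: "\<forall>l\<in>Ii i. s l - d1 / 2 \<le> t l"
    define v where "v = argv Ii gam i s"
    define w where "w = (\<lambda>l. max (v l - d2) 0)"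
    have v0: "\<forall>l. 0 \<le> v l" unfolding v_def using argv_nonneg s by blast
    have vA: "v \<in> A" unfolding A_def v_def using argv_linf s C0 unfolding C1_def
      by (auto simp: argv_def max.coboundedI1)
    then have vC: "\<forall>l. v l \<le> C1" unfolding A_def by auto
    have C1nn: "0 \<le> C1" by (simp add: C1_def)
    have wb: "\<forall>l. 0 \<le> w l \<and> w l \<le> C1"
    proof
      fix l
      have "v l \<le> C1" "0 \<le> v l" using vC v0 by auto
      then show "0 \<le> w l \<and> w l \<le> C1" unfolding w_def using \<open>d2 > 0\<close> C1nn by (auto simp: max_def)
    qed
    have wl: "w \<in> linf_plus" by (rule linf_boundI[OF wb])
    have "\<forall>l. \<bar>w l - v l\<bar> \<le> d2"
    proof
      fix l
      have "0 \<le> v l" using v0 by auto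
      then show "\<bar>w l - v l\<bar> \<le> d2" unfolding w_def using \<open>d2 > 0\<close> by (auto simp: max_def)
    qed
    then have sup: "supnorm (\<lambda>k. w k - v k) \<le> d2" by (rule supnorm_le)
    have m: "\<bar>mu i (restr (Ii i) w) - mu i (restr (Ii i) v)\<bar> \<le> ereal \<eta>"
      using d2[THEN bspec[OF _ vA], THEN bspec[OF _ wl], THEN mp, OF sup] by (rule spec)
    have rv: "restr (Ii i) v = v" unfolding restr_def v_def argv_def by auto
    have "\<forall>l. 0 \<le> restr (Ii i) w l \<and> restr (Ii i) w l \<le> C1" using wb C1nn by (simp add: restr_def)
    then have rwl: "restr (Ii i) w \<in> linf_plus" by (rule linf_boundI)
    have rwf: "\<bar>mu i (restr (Ii i) w)\<bar> \<noteq> \<infinity>"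
      using mu_fin[OF rwl] by (auto simp: restr_def)
    have le: "restr (Ii i) w l \<le> argv Ii gam i t l" for l
    proof (cases "l \<in> Ii i")
      case False then show ?thesis by (simp add: restr_def argv_def)
    next
      case True
      define x' where "x' = max (s l - d1/2) 0"
      have sl: "0 \<le> s l" "s l \<le> R" using s by auto
      have tl: "0 \<le> t l" "s l - d1 / 2 \<le> t l" using t st True by auto
      have x'R: "x' \<in> {0..R}" using sl \<open>d1 > 0\<close> unfolding x'_def by (auto simp: max_def)
      have slR: "s l \<in> {0..R}" using sl by auto
      have dx: "\<bar>x' - s l\<bar> < d1" using sl \<open>d1 > 0\<close> unfolding x'_def by (auto simp: max_def)
      have g1: "\<bar>gam i l x' - gam i l (s l)\<bar> < d2" by (rule d1[rule_format, OF True slR x'R dx])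
      have x'0: "0 \<le> x'" and x't: "x' \<le> t l" using tl unfolding x'_def by auto
      have g2: "gam i l x' \<le> gam i l (t l)" by (rule gam_mono[OF True x'0 x't])
      have g3: "0 \<le> gam i l (t l)" using gam_nonneg[OF True tl(1)] .
      have "restr (Ii i) w l = max (gam i l (s l) - d2) 0" using True unfolding restr_def w_def v_def argv_def by simp
      also have "\<dots> \<le> gam i l (t l)" using g1 g2 g3 by (auto simp: max_def)
      also have "\<dots> = argv Ii gam i t l" using True unfolding argv_def by simp
      finally show ?thesis .
    qed
    have "mu i (restr (Ii i) w) \<le> mu i (argv Ii gam i t)"
      using rwl argv_linf t le by (intro mu_mono) auto
    then have "mu i (restr (Ii i) w) \<le> ereal (Gam Ii gam mu t i)" using mu_argv_eq[OF t] by simp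
    moreover have "mu i (restr (Ii i) v) = ereal (Gam Ii gam mu s i)"
    proof -
      have s0: "\<forall>l. 0 \<le> s l" using s by blast
      show ?thesis unfolding rv unfolding v_def by (rule mu_argv_eq[OF s0])
    qed
    ultimately show "Gam Ii gam mu s i - \<eta> \<le> Gam Ii gam mu t i"
      using ereal_aux[of "mu i (restr (Ii i) w)" "Gam Ii gam mu s i" \<eta>] m rwf by simp
  qed
qed

end

theorem proposition2p19:
  fixes Ii :: "'i::countable \<Rightarrow> 'i set"
    and gam :: "'i \<Rightarrow> 'i \<Rightarrow> real \<Rightarrow> real"
    and mu :: "'i \<Rightarrow> ('i \<Rightarrow> real) \<Rightarrow> ereal"
  assumes "gain_operator Ii gam mu"
    and "GATT (Gam Ii gam mu)"
  shows "uniform_NJI Ii (Gam Ii gam mu)"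
  unfolding uniform_NJI_def
proof (intro allI impI)
  note go = assms(1)
  define G where "G = Gam Ii gam mu"
  fix r e :: real assume "r > 0" "e > 0"
  define z where "z = (\<lambda>_::'i. r)"
  have zl: "z \<in> linf_plus" unfolding z_def using \<open>r > 0\<close> by (intro const_linf) simp
  have itl: "(G ^^ k) s \<in> linf_plus" if "s \<in> linf_plus" for s k
    using that by (induction k) (auto simp: G_def intro: Gam_linf[OF go])
  have nn: "\<forall>l. 0 \<le> (G ^^ k) s l" if "s \<in> linf_plus" for s k
    using itl[OF that, of k] unfolding linf_plus_def by auto
  have "(\<lambda>n. supnorm ((G ^^ n) z)) \<longlonglongrightarrow> 0" using assms(2) zl unfolding GATT_def G_def by blast
  from order_tendstoD(2)[OF this, of "e/2"] \<open>e > 0\<close> obtain K where K: "supnorm ((G ^^ K) z) < e/2"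
    unfolding eventually_sequentially by auto
  have zK: "(G ^^ K) z i < e/2" for i using linf_le[OF itl[OF zl], of K i] K by simp
  have itle: "(G ^^ k) s i \<le> (G ^^ k) z i" if "s \<in> linf_plus" "supnorm s \<le> r" for s k i
  proof (induction k arbitrary: i)
    case 0 then show ?case using linf_le[OF that(1), of i] that(2) by (simp add: z_def)
  next
    case (Suc k)
    show ?case using Gam_mono[OF go nn[OF that(1), of k] nn[OF zl, of k]] Suc.IH by (simp add: G_def)
  qed
  have P: "\<forall>\<eta>>0. \<exists>\<delta>>0. \<forall>s\<in>linf_plus. supnorm s \<le> r \<longrightarrow> (\<forall>i n. (\<forall>j\<in>Nminus Ii i (n+m). \<delta> \<le> s j \<longrightarrow> s j \<le> G s j)
      \<longrightarrow> (\<forall>j\<in>Nminus Ii i n. s j - \<eta> \<le> (G ^^ m) s j))" for m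
  proof (induction m)
    case 0
    show ?case by (auto intro!: exI[of _ 1])
  next
    case (Suc m)
    show ?case
    proof (intro allI impI)
      fix \<eta> :: real assume "\<eta> > 0"
      obtain \<delta>1 where "\<delta>1 > 0" and d1: "\<forall>s t i. (\<forall>l. 0 \<le> s l \<and> s l \<le> r) \<longrightarrow> (\<forall>l. 0 \<le> t l) \<longrightarrow>
          (\<forall>l\<in>Ii i. s l - \<delta>1 \<le> t l) \<longrightarrow> G s i - \<eta>/2 \<le> G t i"
        using Gam_lowcont[OF go, of r "\<eta>/2"] \<open>r > 0\<close> \<open>\<eta> > 0\<close> unfolding G_def by auto
      obtain \<delta>' where "\<delta>' > 0" and d': "\<forall>s\<in>linf_plus. supnorm s \<le> r \<longrightarrow> (\<forall>i n. (\<forall>j\<in>Nminus Ii i (n+m). \<delta>' \<le> s j \<longrightarrow> s j \<le> G s j)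
      \<longrightarrow> (\<forall>j\<in>Nminus Ii i n. s j - \<delta>1 \<le> (G ^^ m) s j))"
        using Suc.IH \<open>\<delta>1 > 0\<close> by blast
      show "\<exists>\<delta>>0. \<forall>s\<in>linf_plus. supnorm s \<le> r \<longrightarrow> (\<forall>i n. (\<forall>j\<in>Nminus Ii i (n+Suc m). \<delta> \<le> s j \<longrightarrow> s j \<le> G s j)
      \<longrightarrow> (\<forall>j\<in>Nminus Ii i n. s j - \<eta> \<le> (G ^^ Suc m) s j))"
      proof (intro exI[of _ "min \<delta>' (\<eta>/2)"] conjI ballI allI impI)
        show "0 < min \<delta>' (\<eta> / 2)" using \<open>\<delta>' > 0\<close> \<open>\<eta> > 0\<close> by simp
        fix s i n j
        assume s: "s \<in> linf_plus" and sr: "supnorm s \<le> r"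
          and H: "\<forall>j\<in>Nminus Ii i (n + Suc m). min \<delta>' (\<eta> / 2) \<le> s j \<longrightarrow> s j \<le> G s j"
          and j: "j \<in> Nminus Ii i n"
        have s0: "\<forall>l. 0 \<le> s l \<and> s l \<le> r"
        proof
          fix l
          have "0 \<le> s l" using s unfolding linf_plus_def by blast
          moreover have "s l \<le> r" using linf_le[OF s, of l] sr by linarith
          ultimately show "0 \<le> s l \<and> s l \<le> r" by blast
        qed
        have "\<forall>j\<in>Nminus Ii i (Suc n + m). \<delta>' \<le> s j \<longrightarrow> s j \<le> G s j" using H by auto
        then have A: "\<forall>l\<in>Nminus Ii i (Suc n). s l - \<delta>1 \<le> (G ^^ m) s l" using d' s sr by blast
        have "\<forall>l\<in>Ii j. s l - \<delta>1 \<le> (G ^^ m) s l" using A N_step[OF j] by blast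
        then have B: "G s j - \<eta>/2 \<le> (G ^^ Suc m) s j" using d1 s0 nn[OF s, of m] by simp
        have jN: "j \<in> Nminus Ii i (n + Suc m)" using N_mono[OF j] by simp
        have C: "s j - \<eta>/2 \<le> G s j"
        proof (cases "min \<delta>' (\<eta> / 2) \<le> s j")
          case True
          then have "s j \<le> G s j" using H jN by blast
          then show ?thesis using \<open>\<eta> > 0\<close> by linarith
        next
          case False
          have s0': "\<forall>l. 0 \<le> s l" using s0 by blast
          have "0 \<le> G s j" unfolding G_def by (rule Gam_nonneg[OF go s0'])
          moreover have "min \<delta>' (\<eta> / 2) \<le> \<eta> / 2" by simp
          ultimately show ?thesis using False by linarith
        qed
        show "s j - \<eta> \<le> (G ^^ Suc m) s j" using B C by simp
      qed
    qed
  qed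
  have e4: "e / 4 > 0" using \<open>e > 0\<close> by simp
  obtain \<delta> where "\<delta> > 0" and d: "\<forall>s\<in>linf_plus. supnorm s \<le> r \<longrightarrow> (\<forall>i n. (\<forall>j\<in>Nminus Ii i (n+K). \<delta> \<le> s j \<longrightarrow> s j \<le> G s j)
      \<longrightarrow> (\<forall>j\<in>Nminus Ii i n. s j - e/4 \<le> (G ^^ K) s j))"
    using P[of K, THEN spec[of _ "e/4"], THEN mp, OF e4] by blast
  show "\<exists>n d. 0 < d \<and> (\<forall>s\<in>linf_plus. \<forall>i. e \<le> s i \<and> supnorm s \<le> r \<longrightarrow>
        (\<exists>j\<in>Nminus Ii i n. d \<le> s j \<and> Gam Ii gam mu s j < s j))"
  proof (intro exI[of _ K] exI[of _ \<delta>] conjI ballI allI impI)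
    show "0 < \<delta>" by fact
    fix s :: "'i \<Rightarrow> real" and i :: 'i assume s: "s \<in> linf_plus" and si: "e \<le> s i \<and> supnorm s \<le> r"
    show "\<exists>j\<in>Nminus Ii i K. \<delta> \<le> s j \<and> Gam Ii gam mu s j < s j"
    proof (rule ccontr)
      assume "\<not> ?thesis"
      then have hyp: "\<forall>j\<in>Nminus Ii i (0+K). \<delta> \<le> s j \<longrightarrow> s j \<le> G s j" unfolding G_def by auto
      have sr: "supnorm s \<le> r" using si by blast
      have "s i - e/4 \<le> (G ^^ K) s i"
        by (rule d[THEN bspec[OF _ s], THEN mp, OF sr, THEN spec[of _ i], THEN spec[of _ 0], THEN mp, OF hyp, THEN bspec[OF _ N_self]])
      moreover have "(G ^^ K) s i \<le> (G ^^ K) z i" by (rule itle[OF s sr])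
      ultimately show False using zK[of i] si \<open>e > 0\<close> by simp
    qed
  qed
qed

end
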